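(* Let $\beta=1$, $\gamma>2$ and $G\in\mathcal S_{Rob}(\mathbb R^* )$. Then $$\lim_{n\to\infty}\mathbb E_{\nu_b}\Big[\sup_{t\in[0,T]}\Big(\int_0^t\frac{\Theta(n)}{\sqrt n}\sum_{x=0}^{\infty}\mathcal R_{n,\beta}G(\tfrac xn)\,\bar\eta^n_s(0)\,ds\Big)^2\Big]=0$$ and $$\lim_{n\to\infty}\mathbb E_{\nu_b}\Big[\sup_{t\in[0,T]}\Big(\int_0^t\frac{\Theta(n)}{\sqrt n}\sum_{x=-\infty}^{-1}\mathcal R_{n,\beta}G(\tfrac xn)\,\bar\eta^n_s(-1)\,ds\Big)^2\Big]=0.$$
   Context: Fix $\gamma>2$, $\alpha>0$, $\beta=1$, $b\in(0,1)$, $T>0$. Let $p(0)=0$, $p(x)=c_\gamma|x|^{-\gamma-1}$ ($x\ne0$), $c_\gamma$ normalizing; $m=\sum_{x\ge1}xp(x)$, $\sigma^2=\sum_xx^2p(x)$, $\kappa_\gamma=\sigma^2/2$, $\hat\alpha=\alpha m/\kappa_\gamma$. Slow bonds: unordered pairs $\{x,y\}$ with $x\le-1$, $y\ge0$; rates $r^n_{x,y}=\alpha n^{-\beta}$ on slow bonds, $1$ otherwise. Exclusion process on $\{0,1\}^{\mathbb Z}$ with generator $\mathcal L_nf(\eta)=\sum_{x,y}p(y-x)\eta(x)(1-\eta(y))r^n_{x,y}[f(\eta^{x,y})-f(\eta)]$. $\Theta(n)=n^2$. $\eta^n_t=\eta_{t\Theta(n)}$ started from the Bernoulli product measure $\nu_b$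 of density $b$; $\mathbb E_{\nu_b}$ is the corresponding expectation; $\bar\eta^n_t(x)=\eta^n_t(x)-b$. $\mathcal S_{Rob}(\mathbb R^* )$: functions $G=\mathbb 1_{\{u<0\}}G_-+\mathbb 1_{\{u\ge0\}}G_+$ with $G_\pm$ Schwartz functions satisfying $G_-^{(2k+1)}(0)=G_+^{(2k+1)}(0)=\hat\alpha[G_+^{(2k)}(0)-G_-^{(2k)}(0)]$ for all $k\ge0$. Operator (for $\beta\ge1$): for $x\ge0$, $\mathcal R_{n,\beta}G(\tfrac xn)=\alpha n^{-\beta}\sum_{y\le-1}[G(\tfrac yn)-G(\tfrac xn)]p(y-x)+n^{-1}G_+'(0)\sum_{y\ge0}(y-x)p(y-x)$; for $x\le-1$, $\mathcal R_{n,\beta}G(\tfrac xn)=\alpha n^{-\beta}\sum_{y\ge0}[G(\tfrac yn)-G(\tfrac xn)]p(y-x)+n^{-1}G_-'(0)\sum_{y\le-1}(y-x)p(y-x)$. *)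

theory Defs
  imports "HOL-Probability.Probability"
begin

definition cgam :: "real \<Rightarrow> real" where
  "cgam \<gamma> = 1 / (\<Sum>\<^sub>\<infinity>x\<in>(UNIV::int set) - {0}. \<bar>real_of_int x\<bar> powr (-\<gamma>-1))"

definition pker :: "real \<Rightarrow> int \<Rightarrow> real" where
  "pker \<gamma> x = (if x = 0 then 0 else cgam \<gamma> * \<bar>real_of_int x\<bar> powr (-\<gamma>-1))"

definition mean_m :: "real \<Rightarrow> real" where
  "mean_m \<gamma> = (\<Sum>\<^sub>\<infinity>x\<in>{1::int..}. real_of_int x * pker \<gamma> x)"

definition sigma2 :: "real \<Rightarrow> real" where
  "sigma2 \<gamma> = (\<Sum>\<^sub>\<infinity>x\<in>(UNIV::int set). (real_of_int x)^2 * pker \<gamma> x)"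

definition kappa :: "real \<Rightarrow> real" where
  "kappa \<gamma> = sigma2 \<gamma> / 2"

definition alpha_hat :: "real \<Rightarrow> real \<Rightarrow> real" where
  "alpha_hat \<gamma> \<alpha> = \<alpha> * mean_m \<gamma> / kappa \<gamma>"

definition schwartz :: "(real \<Rightarrow> real) \<Rightarrow> bool" where
  "schwartz f \<longleftrightarrow>
     (\<forall>j x. (deriv ^^ j) f differentiable at x) \<and>
     (\<forall>j k. bounded (range (\<lambda>x. x ^ k * (deriv ^^ j) f x)))"

text \<open>The pair (G_-, G_+) defines an element of S_Rob(R*).\<close>
definition robin_pair :: "real \<Rightarrow> real \<Rightarrow> (real \<Rightarrow> real) \<Rightarrow> (real \<Rightarrow> real) \<Rightarrow> bool" where
  "robin_pair \<gamma> \<alpha> Gm Gp \<longleftrightarrow> schwartz Gm \<and> schwartz Gp \<and>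
     (\<forall>k::nat.
        (deriv ^^ (2*k+1)) Gm 0 = alpha_hat \<gamma> \<alpha> * ((deriv ^^ (2*k)) Gp 0 - (deriv ^^ (2*k)) Gm 0) \<and>
        (deriv ^^ (2*k+1)) Gp 0 = alpha_hat \<gamma> \<alpha> * ((deriv ^^ (2*k)) Gp 0 - (deriv ^^ (2*k)) Gm 0))"

definition glue :: "(real \<Rightarrow> real) \<Rightarrow> (real \<Rightarrow> real) \<Rightarrow> real \<Rightarrow> real" where
  "glue Gm Gp u = (if u < 0 then Gm u else Gp u)"

text \<open>The operator R_{n,beta} G (x/n) with beta = 1.\<close>
definition Rop :: "real \<Rightarrow> real \<Rightarrow> (real \<Rightarrow> real) \<Rightarrow> (real \<Rightarrow> real) \<Rightarrow> nat \<Rightarrow> int \<Rightarrow> real" where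
  "Rop \<gamma> \<alpha> Gm Gp n x =
     (if x \<ge> 0 then
        \<alpha> / real n * (\<Sum>\<^sub>\<infinity>y\<in>{..-1::int}.
            (glue Gm Gp (real_of_int y / real n) - glue Gm Gp (real_of_int x / real n)) * pker \<gamma> (y - x))
        + 1 / real n * deriv Gp 0 * (\<Sum>\<^sub>\<infinity>y\<in>{0::int..}. real_of_int (y - x) * pker \<gamma> (y - x))
      else
        \<alpha> / real n * (\<Sum>\<^sub>\<infinity>y\<in>{0::int..}.
            (glue Gm Gp (real_of_int y / real n) - glue Gm Gp (real_of_int x / real n)) * pker \<gamma> (y - x))
        + 1 / real n * deriv Gm 0 * (\<Sum>\<^sub>\<infinity>y\<in>{..-1::int}. real_of_int (y - x) * pker \<gamma> (y - x)))"

type_synonym config = "int \<Rightarrow> bool"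

definition exch :: "config \<Rightarrow> int \<Rightarrow> int \<Rightarrow> config" where
  "exch \<eta> x y = (\<lambda>z. if z = x then \<eta> y else if z = y then \<eta> x else \<eta> z)"

definition slow_bond :: "int \<Rightarrow> int \<Rightarrow> bool" where
  "slow_bond x y \<longleftrightarrow> (x \<le> -1 \<and> y \<ge> 0) \<or> (y \<le> -1 \<and> x \<ge> 0)"

text \<open>Rates with beta = 1.\<close>
definition rate :: "real \<Rightarrow> nat \<Rightarrow> int \<Rightarrow> int \<Rightarrow> real" where
  "rate \<alpha> n x y = (if slow_bond x y then \<alpha> / real n else 1)"

definition gen :: "real \<Rightarrow> real \<Rightarrow> nat \<Rightarrow> (config \<Rightarrow> real) \<Rightarrow> config \<Rightarrow> real" where
  "gen \<gamma> \<alpha> n f \<eta> = (\<Sum>\<^sub>\<infinity>(x,y)\<in>(UNIV::(int \<times> int) set).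
      pker \<gamma> (y - x) * of_bool (\<eta> x) * (1 - of_bool (\<eta> y)) * rate \<alpha> n x y
        * (f (exch \<eta> x y) - f \<eta>))"

definition cylinder :: "(config \<Rightarrow> real) \<Rightarrow> bool" where
  "cylinder f \<longleftrightarrow> (\<exists>A. finite A \<and> (\<forall>\<eta> \<zeta>. (\<forall>x\<in>A. \<eta> x = \<zeta> x) \<longrightarrow> f \<eta> = f \<zeta>))"

definition bernoulli_product :: "real \<Rightarrow> config measure" where
  "bernoulli_product b = PiM (UNIV::int set) (\<lambda>_. measure_pmf (bernoulli_pmf b))"

definition nat_filt :: "'a measure \<Rightarrow> (real \<Rightarrow> 'a \<Rightarrow> config) \<Rightarrow> real \<Rightarrow> 'a measure" where
  "nat_filt M X s = sigma (space M) {{\<omega> \<in> space M. X r \<omega> x} | r x. 0 \<le> r \<and> r \<le> s}"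

text \<open>X is (a version of) the exclusion process with generator L_n started from nu_b:
  cadlag paths, initial law nu_b, and X solves the martingale problem for L_n on local
  functions with respect to its natural filtration.\<close>
definition exclusion_solution ::
  "real \<Rightarrow> real \<Rightarrow> real \<Rightarrow> nat \<Rightarrow> 'a measure \<Rightarrow> (real \<Rightarrow> 'a \<Rightarrow> config) \<Rightarrow> bool" where
  "exclusion_solution \<gamma> \<alpha> b n M X \<longleftrightarrow>
     prob_space M \<and>
     (\<forall>t. X t \<in> M \<rightarrow>\<^sub>M bernoulli_product b) \<and>
     distr M (bernoulli_product b) (X 0) = bernoulli_product b \<and>
     (\<forall>\<omega>\<in>space M. \<forall>x. \<forall>t\<ge>0.
        (\<forall>\<^sub>F s in at_right t. X s \<omega> x = X t \<omega> x) \<and>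
        (t > 0 \<longrightarrow> (\<exists>v. \<forall>\<^sub>F s in at_left t. X s \<omega> x = v))) \<and>
     (\<forall>f. cylinder f \<longrightarrow>
        (let Mf = (\<lambda>t \<omega>. f (X t \<omega>) - f (X 0 \<omega>)
                     - (LINT s:{0..t}|lborel. gen \<gamma> \<alpha> n f (X s \<omega>)))
         in \<forall>t\<ge>0. integrable M (Mf t) \<and> Mf t \<in> borel_measurable (nat_filt M X t) \<and>
              (\<forall>s. 0 \<le> s \<and> s \<le> t \<longrightarrow>
                 (\<forall>A\<in>sets (nat_filt M X s).
                    (LINT \<omega>:A|M. Mf t \<omega>) = (LINT \<omega>:A|M. Mf s \<omega>)))))"

end

theory Submission
  imports Defs
begin


lemma infsum_eq_suminf_abs:
  fixes f :: "nat \<Rightarrow> real"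
  assumes "summable (\<lambda>n. \<bar>f n\<bar>)"
  shows "infsum f UNIV = suminf f" and "f summable_on UNIV"
proof -
  have s: "summable f" using assms summable_rabs_cancel by blast
  have "(f has_sum suminf f) UNIV"
    using norm_summable_imp_has_sum[of f "suminf f"] assms s by (simp add: summable_sums)
  then show "infsum f UNIV = suminf f" "f summable_on UNIV"
    by (auto intro: infsumI has_sum_imp_summable)
qed

lemma tail_sum:
  fixes g :: "nat \<Rightarrow> real"
  assumes g0: "\<And>k. g k \<ge> 0" and sg: "summable (\<lambda>k. real k * g k)"
  shows "summable (\<lambda>i. \<Sum>l. g (l + Suc i))" and "(\<Sum>i. \<Sum>l. g (l + Suc i)) = (\<Sum>k. real k * g k)"
proof -
  have "summable (\<lambda>k. real (Suc k) * g (Suc k))"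
    using sg summable_Suc_iff[of "\<lambda>k. real k * g k"] by simp
  then have "summable (\<lambda>k. g (Suc k))"
    by (rule summable_comparison_test'[where N=0]) (use g0 in \<open>auto simp: algebra_simps\<close>)
  then have sgg: "summable g" using summable_Suc_iff by blast
  define S where "S = Sigma (UNIV::nat set) (\<lambda>k. {..<k})"
  define S' where "S' = Sigma (UNIV::nat set) (\<lambda>i. {Suc i..})"
  have kg: "(\<lambda>k. real k * g k) summable_on UNIV"
    using summable_on_UNIV_nonneg_real_iff[of "\<lambda>k. real k * g k"] sg g0 by simp
  have h1: "(\<lambda>(k,i). g k) summable_on S"
    unfolding S_def
    by (rule summable_on_SigmaI[where g="\<lambda>k. real k * g k"]) (use kg g0 in \<open>auto intro: has_sum_finiteI\<close>)
  have h2: "infsum (\<lambda>(k,i). g k) S = (\<Sum>\<^sub>\<infinity>k. real k * g k)"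
    using infsum_Sigma'_banach[of "\<lambda>k i. g k" UNIV "\<lambda>k. {..<k}"] h1 unfolding S_def by simp
  have bij: "bij_betw (\<lambda>(i,k). (k,i)) S' S"
    unfolding S_def S'_def by (rule bij_betw_byWitness[where f'="\<lambda>(k,i). (i,k)"]) auto
  have h3: "(\<lambda>(i,k). g k) summable_on S'"
    using summable_on_reindex_bij_betw[OF bij, of "\<lambda>(k,i). g k"] h1 by (simp add: case_prod_unfold)
  have h3': "infsum (\<lambda>(i,k). g k) S' = infsum (\<lambda>(k,i). g k) S"
    using infsum_reindex_bij_betw[OF bij, of "\<lambda>(k,i). g k"] by (simp add: case_prod_unfold)
  have h4: "infsum (\<lambda>i. infsum g {Suc i..}) UNIV = infsum (\<lambda>(i,k). g k) S'"
    and h4s: "(\<lambda>i. infsum g {Suc i..}) summable_on UNIV"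
    using infsum_Sigma'_banach[of "\<lambda>i k. g k" UNIV "\<lambda>i. {Suc i..}"]
      summable_on_Sigma_banach[of "\<lambda>i k. g k" UNIV "\<lambda>i. {Suc i..}"] h3 unfolding S'_def by auto
  have h5: "infsum g {Suc i..} = (\<Sum>l. g (l + Suc i))" for i
  proof -
    have b: "bij_betw (\<lambda>l. l + Suc i) UNIV {Suc i..}"
      by (rule bij_betw_byWitness[where f'="\<lambda>k. k - Suc i"]) auto
    have "infsum g {Suc i..} = infsum (\<lambda>l. g (l + Suc i)) UNIV"
      using infsum_reindex_bij_betw[OF b, of g] by simp
    also have "\<dots> = (\<Sum>l. g (l + Suc i))"
      by (rule infsum_eq_suminf_abs) (use g0 summable_iff_shift[of g "Suc i"] sgg in auto)
    finally show ?thesis .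
  qed
  have kgs: "(\<Sum>\<^sub>\<infinity>k. real k * g k) = (\<Sum>k. real k * g k)"
    by (rule infsum_eq_suminf_abs) (use g0 sg in auto)
  have t0: "(\<Sum>l. g (l + Suc i)) \<ge> 0" for i
    using g0 summable_iff_shift[of g "Suc i"] sgg by (auto intro: suminf_nonneg)
  show s: "summable (\<lambda>i. \<Sum>l. g (l + Suc i))"
    using h4s h5 summable_on_imp_summable by simp
  have "(\<Sum>i. \<Sum>l. g (l + Suc i)) = infsum (\<lambda>i. infsum g {Suc i..}) UNIV"
    by (subst infsum_eq_suminf_abs) (use s t0 h5 in auto)
  then show "(\<Sum>i. \<Sum>l. g (l + Suc i)) = (\<Sum>k. real k * g k)"
    using h4 h3' h2 kgs by simp
qed

lemma main_bound:
  fixes q A B :: "nat \<Rightarrow> real" and n :: nat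
  assumes q0: "\<And>k. q k \<ge> 0" and sq: "summable (\<lambda>k. real k ^ 2 * q k)"
    and n: "n > 0" and L: "L \<ge> 0" and al: "\<alpha> \<ge> 0"
    and hA: "\<And>j. \<bar>A j - Az\<bar> \<le> L * real (Suc j) / real n"
    and hB: "\<And>i. \<bar>B i - Bz\<bar> \<le> L * real (Suc i) / real n"
    and rob: "\<alpha> * (Az - Bz) * (\<Sum>k. real k * q k) + c * (\<Sum>k. real k ^ 2 * q k) = 0"
  defines "R \<equiv> \<lambda>i. \<alpha> / real n * (\<Sum>j. (A j - B i) * q (j + Suc i))
                   + c / real n * (\<Sum>l. real (l + Suc i) * q (l + Suc i))"
  shows "summable (\<lambda>i. \<bar>R i\<bar>)"
    and "\<bar>\<Sum>i. R i\<bar> \<le> 2 * \<alpha> * L / real n ^ 2 * (\<Sum>k. real k ^ 2 * q k)"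
proof -
  have nn: "\<And>m::nat. real m \<le> real m * real m"
    by (metis of_nat_le_iff of_nat_mult le_square)
  have sq1: "summable (\<lambda>k. real k * q k)"
    by (rule summable_comparison_test'[OF sq, where N=0])
       (use q0 nn in \<open>auto simp: power2_eq_square intro!: mult_right_mono\<close>)
  define K where "K i = (\<Sum>l. real (l + Suc i) * q (l + Suc i))" for i
  define Tq where "Tq i = (\<Sum>l. q (l + Suc i))" for i
  have tk: "summable K" "(\<Sum>i. K i) = (\<Sum>k. real k ^ 2 * q k)"
    using tail_sum[of "\<lambda>k. real k * q k"] q0 sq unfolding K_def
    by (auto simp: power2_eq_square mult.assoc)
  have tq: "summable Tq" "(\<Sum>i. Tq i) = (\<Sum>k. real k * q k)"
    using tail_sum[of q] q0 sq1 unfolding Tq_def by auto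
  have sK: "summable (\<lambda>l. real (l + Suc i) * q (l + Suc i))" for i
    using summable_iff_shift[of "\<lambda>k. real k * q k" "Suc i"] sq1 by simp
  have sT: "summable (\<lambda>l. q (l + Suc i))" for i
  proof (rule summable_comparison_test'[OF sK[of i], where N=0])
    fix l
    show "norm (q (l + Suc i)) \<le> real (l + Suc i) * q (l + Suc i)"
      using mult_right_mono[of 1 "real (l+Suc i)" "q (l+Suc i)"] q0[of "l + Suc i"] by simp
  qed
  define e where "e i j = (A j - Az - (B i - Bz)) * q (j + Suc i)" for i j
  define E where "E i = (\<Sum>j. e i j)" for i
  have eb: "\<bar>e i j\<bar> \<le> 2 * L / real n * (real (j + Suc i) * q (j + Suc i))" for i j
  proof -
    have "\<bar>A j - Az - (B i - Bz)\<bar> \<le> L * real (Suc j) / real n + L * real (Suc i) / real n"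
      using hA[of j] hB[of i] by linarith
    also have "\<dots> \<le> 2 * L / real n * real (j + Suc i)"
      using L n by (auto simp: field_simps intro!: mult_left_mono)
    finally have "\<bar>A j - Az - (B i - Bz)\<bar> * q (j + Suc i) \<le> 2 * L / real n * real (j + Suc i) * q (j + Suc i)"
      using q0[of "j + Suc i"] by (intro mult_right_mono) auto
    then show ?thesis unfolding e_def abs_mult using q0[of "j + Suc i"] by (simp add: mult.assoc)
  qed
  have se: "summable (\<lambda>j. \<bar>e i j\<bar>)" for i
    by (rule summable_comparison_test'[OF summable_mult[OF sK[of i], of "2 * L / real n"], where N=0])
       (use eb in auto)
  have Eb: "\<bar>E i\<bar> \<le> 2 * L / real n * K i" for i
  proof -
    have "\<bar>E i\<bar> \<le> (\<Sum>j. \<bar>e i j\<bar>)" unfolding E_def by (rule summable_rabs[OF se])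
    also have "\<dots> \<le> (\<Sum>j. 2 * L / real n * (real (j + Suc i) * q (j + Suc i)))"
      by (rule suminf_le) (use eb se summable_mult[OF sK[of i]] in auto)
    also have "\<dots> = 2 * L / real n * K i" unfolding K_def
      by (rule suminf_mult[OF sK])
    finally show ?thesis .
  qed
  have sE: "summable E"
    by (rule summable_comparison_test'[OF summable_mult[OF tk(1), of "2 * L / real n"], where N=0])
       (use Eb in auto)
  have sEa: "summable (\<lambda>i. \<bar>E i\<bar>)"
    by (rule summable_comparison_test'[OF summable_mult[OF tk(1), of "2 * L / real n"], where N=0])
       (use Eb in auto)
  have Rsplit: "R i = \<alpha> / real n * E i + \<alpha> / real n * (Az - Bz) * Tq i + c / real n * K i" for i
  proof -
    have "(\<Sum>j. (A j - B i) * q (j + Suc i)) = (\<Sum>j. e i j + (Az - Bz) * q (j + Suc i))"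
      unfolding e_def by (simp add: algebra_simps)
    also have "\<dots> = E i + (Az - Bz) * Tq i"
      unfolding E_def Tq_def
      using suminf_add[OF summable_rabs_cancel[OF se[of i]] summable_mult[OF sT[of i], of "Az - Bz"]]
        suminf_mult[OF sT[of i], of "Az - Bz"] by simp
    finally have eqS: "(\<Sum>j. (A j - B i) * q (j + Suc i)) = E i + (Az - Bz) * Tq i" .
    show ?thesis unfolding R_def K_def eqS by (simp add: algebra_simps diff_divide_distrib)
  qed
  have Rb: "\<bar>R i\<bar> \<le> \<alpha> / real n * (2 * L / real n * K i) + \<bar>\<alpha> / real n * (Az - Bz)\<bar> * Tq i
      + \<bar>c / real n\<bar> * K i" for i
  proof -
    have K0: "K i \<ge> 0" unfolding K_def using sK[of i] q0 by (auto intro!: suminf_nonneg)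
    have T0: "Tq i \<ge> 0" unfolding Tq_def using sT[of i] q0 by (auto intro!: suminf_nonneg)
    have tri: "\<And>x y z::real. \<bar>x+y+z\<bar> \<le> \<bar>x\<bar>+\<bar>y\<bar>+\<bar>z\<bar>" by arith
    have a1: "\<bar>\<alpha> / real n * E i\<bar> \<le> \<alpha> / real n * (2 * L / real n * K i)"
    proof -
      have "\<alpha> / real n * \<bar>E i\<bar> \<le> \<alpha> / real n * (2 * L / real n * K i)"
        by (intro mult_left_mono Eb) (use al in simp)
      then show ?thesis using al n by (simp add: abs_mult)
    qed
    have a2: "\<bar>\<alpha> / real n * (Az - Bz) * Tq i\<bar> = \<bar>\<alpha> / real n * (Az - Bz)\<bar> * Tq i"
      using T0 by (simp add: abs_mult)
    have a3: "\<bar>c / real n * K i\<bar> = \<bar>c / real n\<bar> * K i"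
      using K0 by (simp add: abs_mult)
    show ?thesis unfolding Rsplit using tri[of "\<alpha> / real n * E i" "\<alpha> / real n * (Az - Bz) * Tq i" "c / real n * K i"] a1 a2 a3
      by linarith
  qed
  show "summable (\<lambda>i. \<bar>R i\<bar>)"
  proof (rule summable_comparison_test'[where N=0])
    show "summable (\<lambda>i. \<alpha> / real n * (2 * L / real n * K i) + \<bar>\<alpha> / real n * (Az - Bz)\<bar> * Tq i
      + \<bar>c / real n\<bar> * K i)"
      by (intro summable_add summable_mult tk(1) tq(1))
    show "norm \<bar>R i\<bar> \<le> \<alpha> / real n * (2 * L / real n * K i) + \<bar>\<alpha> / real n * (Az - Bz)\<bar> * Tq i
      + \<bar>c / real n\<bar> * K i" for i
      using Rb[of i] by simp
  qed
  have "(\<Sum>i. R i) = (\<Sum>i. \<alpha> / real n * E i + \<alpha> / real n * (Az - Bz) * Tq i + c / real n * K i)"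
    using Rsplit by simp
  also have "\<dots> = \<alpha> / real n * (\<Sum>i. E i) + \<alpha> / real n * (Az - Bz) * (\<Sum>i. Tq i) + c / real n * (\<Sum>i. K i)"
    by (rule sums_unique[symmetric]) (intro sums_add sums_mult summable_sums sE tq(1) tk(1))
  also have "\<dots> = \<alpha> / real n * (\<Sum>i. E i)"
  proof -
    have "\<alpha> / real n * (Az - Bz) * (\<Sum>i. Tq i) + c / real n * (\<Sum>i. K i)
       = (\<alpha> * (Az - Bz) * (\<Sum>k. real k * q k) + c * (\<Sum>k. real k ^ 2 * q k)) / real n"
      using tq(2) tk(2) n by (simp add: field_simps)
    then show ?thesis using rob by simp
  qed
  finally have eq: "(\<Sum>i. R i) = \<alpha> / real n * (\<Sum>i. E i)" .
  have "\<bar>\<Sum>i. E i\<bar> \<le> (\<Sum>i. \<bar>E i\<bar>)" by (rule summable_rabs[OF sEa])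
  also have "\<dots> \<le> (\<Sum>i. 2 * L / real n * K i)"
    by (rule suminf_le) (use Eb sEa summable_mult[OF tk(1)] in auto)
  also have "\<dots> = 2 * L / real n * (\<Sum>k. real k ^ 2 * q k)"
    using suminf_mult[OF tk(1), of "2 * L / real n"] tk(2) by (simp only:)
  finally have "\<bar>\<Sum>i. E i\<bar> \<le> 2 * L / real n * (\<Sum>k. real k ^ 2 * q k)" .
  then have "\<alpha> / real n * \<bar>\<Sum>i. E i\<bar> \<le> \<alpha> / real n * (2 * L / real n * (\<Sum>k. real k ^ 2 * q k))"
    using al n by (intro mult_left_mono) auto
  then show "\<bar>\<Sum>i. R i\<bar> \<le> 2 * \<alpha> * L / real n ^ 2 * (\<Sum>k. real k ^ 2 * q k)"
    unfolding eq using al n by (simp add: abs_mult power2_eq_square mult_ac)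
qed

lemma schwartz_facts:
  assumes "schwartz G"
  shows "\<And>x. DERIV G x :> deriv G x"
    and "\<exists>L. \<forall>x. \<bar>deriv G x\<bar> \<le> L"
    and "\<exists>M. \<forall>x. \<bar>G x\<bar> \<le> M"
proof -
  have d: "\<forall>x. G differentiable at x" using assms unfolding schwartz_def
    by (metis funpow_0)
  then show "\<And>x. DERIV G x :> deriv G x" using DERIV_deriv_iff_real_differentiable by blast
  have "bounded (range (\<lambda>x. x ^ 0 * (deriv ^^ 1) G x))" using assms unfolding schwartz_def by blast
  then have "bounded (range (deriv G))" by simp
  then show "\<exists>L. \<forall>x. \<bar>deriv G x\<bar> \<le> L" unfolding bounded_iff by auto
  have "bounded (range (\<lambda>x. x ^ 0 * (deriv ^^ 0) G x))" using assms unfolding schwartz_def by blast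
  then have "bounded (range G)" by simp
  then show "\<exists>M. \<forall>x. \<bar>G x\<bar> \<le> M" unfolding bounded_iff by auto
qed

lemma schwartz_lip:
  assumes "schwartz G"
  shows "\<exists>L\<ge>0. \<forall>u. \<bar>G u - G 0\<bar> \<le> L * \<bar>u\<bar>"
proof -
  note D = schwartz_facts(1)[OF assms]
  obtain L where L: "\<And>x. \<bar>deriv G x\<bar> \<le> L" using schwartz_facts(2)[OF assms] by blast
  have L0: "L \<ge> 0" using L[of 0] by linarith
  have "\<bar>G u - G 0\<bar> \<le> L * \<bar>u\<bar>" for u
  proof (cases u "0::real" rule: linorder_cases)
    case less
    obtain z where "G 0 - G u = (0 - u) * deriv G z" using MVT2[OF less, of G "deriv G"] D by blast
    then have "\<bar>G u - G 0\<bar> = \<bar>u\<bar> * \<bar>deriv G z\<bar>" by (simp add: abs_mult abs_minus_commute)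
    also have "\<dots> \<le> \<bar>u\<bar> * L" using L[of z] by (intro mult_left_mono) auto
    finally show ?thesis by (simp add: mult.commute)
  next
    case equal then show ?thesis by simp
  next
    case greater
    obtain z where "G u - G 0 = (u - 0) * deriv G z" using MVT2[OF greater, of G "deriv G"] D by blast
    then have "\<bar>G u - G 0\<bar> = \<bar>u\<bar> * \<bar>deriv G z\<bar>" by (simp add: abs_mult)
    also have "\<dots> \<le> \<bar>u\<bar> * L" using L[of z] by (intro mult_left_mono) auto
    finally show ?thesis by (simp add: mult.commute)
  qed
  then show ?thesis using L0 by blast
qed



lemma bij_int_nat: "bij_betw int UNIV {0::int..}"
  by (rule bij_betw_byWitness[where f'=nat]) auto

lemma bij_neg_nat: "bij_betw (\<lambda>j::nat. -1 - int j) UNIV {..-1::int}"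
  by (rule bij_betw_byWitness[where f'="\<lambda>y. nat (-1-y)"]) auto

lemma pker_nonneg: "pker \<gamma> x \<ge> 0"
proof -
  have "cgam \<gamma> \<ge> 0" unfolding cgam_def by (simp add: infsum_nonneg)
  then show ?thesis unfolding pker_def by simp
qed

lemma pker_sym: "pker \<gamma> (-x) = pker \<gamma> x"
  by (simp add: pker_def)

lemma pker_sq_eq: "real k ^ 2 * pker \<gamma> (int k) = cgam \<gamma> * real k powr (1 - \<gamma>)"
proof (cases "k = 0")
  case False
  then have k0: "real k > 0" by simp
  have "real k ^ 2 = real k powr 2" using powr_realpow[OF k0, of 2] by simp
  moreover have "real k powr (2 + (-\<gamma>-1)) = real k powr 2 * real k powr (-\<gamma>-1)"
    by (rule powr_add)
  ultimately have "real k ^ 2 * real k powr (-\<gamma>-1) = real k powr (2 + (-\<gamma>-1))"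
    by simp
  also have "\<dots> = real k powr (1 - \<gamma>)" by (simp add: algebra_simps)
  finally have "real k ^ 2 * real k powr (-\<gamma>-1) = real k powr (1 - \<gamma>)" .
  then show ?thesis using False unfolding pker_def by (simp add: mult_ac)
qed (simp add: pker_def)

lemma pker_summable:
  assumes "\<gamma> > 2"
  shows "summable (\<lambda>k::nat. real k ^ 2 * pker \<gamma> (int k))"
  unfolding pker_sq_eq using assms by (intro summable_mult) (simp add: summable_real_powr_iff)

lemma pker_summable1:
  assumes "\<gamma> > 2"
  shows "summable (\<lambda>k::nat. real k * pker \<gamma> (int k))"
proof -
  have nn: "\<And>m::nat. real m \<le> real m * real m"
    by (metis of_nat_le_iff of_nat_mult le_square)
  show ?thesis
    by (rule summable_comparison_test'[OF pker_summable[OF assms], where N=0])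
       (use pker_nonneg nn in \<open>auto simp: power2_eq_square intro!: mult_right_mono\<close>)
qed

lemma mean_eq:
  assumes "\<gamma> > 2"
  shows "mean_m \<gamma> = (\<Sum>k. real k * pker \<gamma> (int k))"
proof -
  have b: "bij_betw (\<lambda>k. int (Suc k)) UNIV {1::int..}"
    by (rule bij_betw_byWitness[where f'="\<lambda>x. nat x - 1"]) auto
  have s: "summable (\<lambda>k. real (Suc k) * pker \<gamma> (int (Suc k)))"
    using pker_summable1[OF assms] summable_Suc_iff[of "\<lambda>k. real k * pker \<gamma> (int k)"] by simp
  have "mean_m \<gamma> = infsum (\<lambda>k. real_of_int (int (Suc k)) * pker \<gamma> (int (Suc k))) UNIV"
    unfolding mean_m_def using infsum_reindex_bij_betw[OF b, of "\<lambda>x. real_of_int x * pker \<gamma> x"] by simp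
  also have "\<dots> = (\<Sum>k. real (Suc k) * pker \<gamma> (int (Suc k)))"
    by (subst infsum_eq_suminf_abs) (use s pker_nonneg in auto)
  also have "\<dots> = (\<Sum>k. real k * pker \<gamma> (int k))"
    using suminf_split_head[OF pker_summable1[OF assms]] by simp
  finally show ?thesis .
qed

lemma kappa_eq:
  assumes "\<gamma> > 2"
  shows "kappa \<gamma> = (\<Sum>k. real k ^ 2 * pker \<gamma> (int k))"
proof -
  define f where "f x = (real_of_int x)^2 * pker \<gamma> x" for x
  have s0: "summable (\<lambda>k. real k ^ 2 * pker \<gamma> (int k))" by (rule pker_summable[OF assms])
  have s1: "summable (\<lambda>k. real (Suc k) ^ 2 * pker \<gamma> (int (Suc k)))"
    using s0 summable_Suc_iff[of "\<lambda>k. real k ^ 2 * pker \<gamma> (int k)"] by simp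
  have e1: "f (int k) = real k ^ 2 * pker \<gamma> (int k)" for k unfolding f_def by simp
  have e2: "f (-1 - int k) = real (Suc k) ^ 2 * pker \<gamma> (int (Suc k))" for k
  proof -
    have "pker \<gamma> (-1 - int k) = pker \<gamma> (int (Suc k))"
      using pker_sym[of \<gamma> "int (Suc k)"] by simp
    moreover have "(real_of_int (-1 - int k))^2 = real (Suc k) ^ 2"
      by (simp add: power2_eq_square algebra_simps)
    ultimately show ?thesis unfolding f_def by simp
  qed
  have i1: "infsum (\<lambda>k. f (int k)) UNIV = (\<Sum>k. real k ^ 2 * pker \<gamma> (int k))"
    unfolding e1 by (rule infsum_eq_suminf_abs) (use s0 pker_nonneg in auto)
  have u1: "(\<lambda>k. f (int k)) summable_on UNIV"
    unfolding e1 by (rule infsum_eq_suminf_abs) (use s0 pker_nonneg in auto)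
  have i2: "infsum (\<lambda>k. f (-1 - int k)) UNIV = (\<Sum>k. real (Suc k) ^ 2 * pker \<gamma> (int (Suc k)))"
    unfolding e2 by (rule infsum_eq_suminf_abs) (use s1 pker_nonneg in auto)
  have u2: "(\<lambda>k. f (-1 - int k)) summable_on UNIV"
    unfolding e2 by (rule infsum_eq_suminf_abs) (use s1 pker_nonneg in auto)
  have U: "(UNIV::int set) = {0..} \<union> {..-1}" by auto
  have "sigma2 \<gamma> = infsum f ({0..} \<union> {..-1})" unfolding sigma2_def f_def U[symmetric] by simp
  also have "\<dots> = infsum f {0..} + infsum f {..-1}"
    by (rule infsum_Un_disjoint)
       (use u1 u2 summable_on_reindex_bij_betw[OF bij_int_nat, of f]
          summable_on_reindex_bij_betw[OF bij_neg_nat, of f] in auto)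
  also have "\<dots> = (\<Sum>k. real k ^ 2 * pker \<gamma> (int k)) + (\<Sum>k. real (Suc k) ^ 2 * pker \<gamma> (int (Suc k)))"
    using i1 i2 infsum_reindex_bij_betw[OF bij_int_nat, of f] infsum_reindex_bij_betw[OF bij_neg_nat, of f]
    by simp
  also have "\<dots> = 2 * (\<Sum>k. real k ^ 2 * pker \<gamma> (int k))"
    using suminf_split_head[OF s0] by simp
  finally show ?thesis unfolding kappa_def by simp
qed

lemma tailE:
  assumes "\<gamma> > 2"
  shows "infsum (\<lambda>j::nat. real_of_int (int j - int i) * pker \<gamma> (int j - int i)) UNIV
       = (\<Sum>l. real (l + Suc i) * pker \<gamma> (int (l + Suc i)))"
proof -
  define f where "f j = real_of_int (int j - int i) * pker \<gamma> (int j - int i)" for j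
  have sh: "f (l + Suc (2*i)) = real (l + Suc i) * pker \<gamma> (int (l + Suc i))" for l
    unfolding f_def by (simp add: algebra_simps)
  have sK: "summable (\<lambda>l. real (l + Suc i) * pker \<gamma> (int (l + Suc i)))"
    using summable_iff_shift[of "\<lambda>k. real k * pker \<gamma> (int k)" "Suc i"] pker_summable1[OF assms] by simp
  have sa: "summable (\<lambda>j. \<bar>f j\<bar>)"
    using summable_iff_shift[of "\<lambda>j. \<bar>f j\<bar>" "Suc (2*i)"] sK pker_nonneg unfolding sh by simp
  have sum0: "sum f {..<Suc (2*i)} = 0"
  proof -
    have "sum f {..<Suc (2*i)} = (\<Sum>j<Suc (2*i). f (Suc (2*i) - Suc j))"
      by (rule sum.nat_diff_reindex[symmetric])
    also have "\<dots> = (\<Sum>j<Suc (2*i). - f j)"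
    proof (rule sum.cong)
      fix j assume "j \<in> {..<Suc (2*i)}"
      then have "int (Suc (2*i) - Suc j) - int i = - (int j - int i)" by auto
      then show "f (Suc (2*i) - Suc j) = - f j"
        unfolding f_def using pker_sym[of \<gamma> "int j - int i"] by (simp add: algebra_simps)
    qed simp
    finally show ?thesis by (simp add: sum_negf)
  qed
  have "infsum f UNIV = suminf f" by (rule infsum_eq_suminf_abs[OF sa])
  also have "\<dots> = (\<Sum>l. f (l + Suc (2*i)))"
    using suminf_split_initial_segment[OF summable_rabs_cancel[OF sa], of "Suc (2*i)"] sum0 by simp
  finally show ?thesis unfolding f_def[symmetric] sh .
qed



lemma q_shift_summable:
  assumes "\<gamma> > 2"
  shows "summable (\<lambda>l. pker \<gamma> (int (l + Suc i)))"
proof -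
  have sK: "summable (\<lambda>l. real (l + Suc i) * pker \<gamma> (int (l + Suc i)))"
    using summable_iff_shift[of "\<lambda>k. real k * pker \<gamma> (int k)" "Suc i"] pker_summable1[OF assms] by simp
  show ?thesis
  proof (rule summable_comparison_test'[OF sK, where N=0])
    fix l
    show "norm (pker \<gamma> (int (l + Suc i))) \<le> real (l + Suc i) * pker \<gamma> (int (l + Suc i))"
      using mult_right_mono[of 1 "real (l+Suc i)" "pker \<gamma> (int (l + Suc i))"] pker_nonneg[of \<gamma> "int (l + Suc i)"] by simp
  qed
qed

lemma glue_neg: "real n > 0 \<Longrightarrow> glue Gm Gp (real_of_int (-1 - int j) / real n) = Gm (- real (Suc j) / real n)"
proof -
  assume n: "real n > 0"
  have e: "real_of_int (-1 - int j) = - real (Suc j)" by simp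
  have "- real (Suc j) / real n < 0" using n by (simp add: divide_neg_pos)
  then show ?thesis unfolding glue_def e by simp
qed

lemma glue_pos: "glue Gm Gp (real_of_int (int j) / real n) = Gp (real j / real n)"
proof -
  have "\<not> real j / real n < 0" by (simp add: not_less)
  then show ?thesis unfolding glue_def by simp
qed

lemma sum_conv:
  fixes A :: "nat \<Rightarrow> real"
  assumes "\<gamma> > 2" and M: "\<And>j. \<bar>A j\<bar> \<le> M"
  shows "infsum (\<lambda>j. (A j - b) * pker \<gamma> (int (j + Suc i))) UNIV
       = (\<Sum>j. (A j - b) * pker \<gamma> (int (j + Suc i)))"
proof (rule infsum_eq_suminf_abs)
  show "summable (\<lambda>j. \<bar>(A j - b) * pker \<gamma> (int (j + Suc i))\<bar>)"
  proof (rule summable_comparison_test'[OF summable_mult[OF q_shift_summable[OF assms(1), of i], of "M + \<bar>b\<bar>"], where N=0])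
    fix j
    have "\<bar>A j - b\<bar> \<le> M + \<bar>b\<bar>" using M[of j] by linarith
    then show "norm \<bar>(A j - b) * pker \<gamma> (int (j + Suc i))\<bar> \<le> (M + \<bar>b\<bar>) * pker \<gamma> (int (j + Suc i))"
      using pker_nonneg[of \<gamma> "int (j + Suc i)"] by (simp add: abs_mult mult_right_mono)
  qed
qed

lemma rop_case1:
  assumes "\<gamma> > 2" and n: "n > 0" and M: "\<And>u. \<bar>Gm u\<bar> \<le> M"
  shows "Rop \<gamma> \<alpha> Gm Gp n (int i) =
     \<alpha> / real n * (\<Sum>j. (Gm (- real (Suc j) / real n) - Gp (real i / real n)) * pker \<gamma> (int (j + Suc i)))
     + deriv Gp 0 / real n * (\<Sum>l. real (l + Suc i) * pker \<gamma> (int (l + Suc i)))"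
proof -
  have n': "real n > 0" using n by simp
  have p: "pker \<gamma> (-1 - int j - int i) = pker \<gamma> (int (j + Suc i))" for j
    using pker_sym[of \<gamma> "int (j + Suc i)"] by (simp add: algebra_simps)
  have i1: "infsum (\<lambda>y. (glue Gm Gp (real_of_int y / real n) - glue Gm Gp (real_of_int (int i) / real n)) * pker \<gamma> (y - int i)) {..-1}
     = (\<Sum>j. (Gm (- real (Suc j) / real n) - Gp (real i / real n)) * pker \<gamma> (int (j + Suc i)))"
  proof -
    have "infsum (\<lambda>y. (glue Gm Gp (real_of_int y / real n) - glue Gm Gp (real_of_int (int i) / real n)) * pker \<gamma> (y - int i)) {..-1}
      = infsum (\<lambda>j. (glue Gm Gp (real_of_int (-1 - int j) / real n) - glue Gm Gp (real_of_int (int i) / real n)) * pker \<gamma> (-1 - int j - int i)) UNIV"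
      by (rule infsum_reindex_bij_betw[OF bij_neg_nat, symmetric])
    also have "\<dots> = infsum (\<lambda>j. (Gm (- real (Suc j) / real n) - Gp (real i / real n)) * pker \<gamma> (int (j + Suc i))) UNIV"
      by (rule infsum_cong) (simp only: glue_neg[OF n'] glue_pos p)
    also have "\<dots> = (\<Sum>j. (Gm (- real (Suc j) / real n) - Gp (real i / real n)) * pker \<gamma> (int (j + Suc i)))"
      by (rule sum_conv[OF assms(1)]) (rule M)
    finally show ?thesis .
  qed
  have i2: "infsum (\<lambda>y. real_of_int (y - int i) * pker \<gamma> (y - int i)) {0..}
     = (\<Sum>l. real (l + Suc i) * pker \<gamma> (int (l + Suc i)))"
    using infsum_reindex_bij_betw[OF bij_int_nat, of "\<lambda>y. real_of_int (y - int i) * pker \<gamma> (y - int i)", symmetric]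
      tailE[OF assms(1), of i] by simp
  show ?thesis unfolding Rop_def using i1 i2 by simp
qed

lemma rop_case2:
  assumes "\<gamma> > 2" and n: "n > 0" and M: "\<And>u. \<bar>Gp u\<bar> \<le> M"
  shows "Rop \<gamma> \<alpha> Gm Gp n (-1 - int i) =
     \<alpha> / real n * (\<Sum>j. (Gp (real j / real n) - Gm (- real (Suc i) / real n)) * pker \<gamma> (int (j + Suc i)))
     + (- deriv Gm 0) / real n * (\<Sum>l. real (l + Suc i) * pker \<gamma> (int (l + Suc i)))"
proof -
  have n': "real n > 0" using n by simp
  have p: "int j - (-1 - int i) = int (j + Suc i)" for j by simp
  have i1: "infsum (\<lambda>y. (glue Gm Gp (real_of_int y / real n) - glue Gm Gp (real_of_int (-1 - int i) / real n)) * pker \<gamma> (y - (-1 - int i))) {0..}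
     = (\<Sum>j. (Gp (real j / real n) - Gm (- real (Suc i) / real n)) * pker \<gamma> (int (j + Suc i)))"
  proof -
    have "infsum (\<lambda>y. (glue Gm Gp (real_of_int y / real n) - glue Gm Gp (real_of_int (-1 - int i) / real n)) * pker \<gamma> (y - (-1 - int i))) {0..}
      = infsum (\<lambda>j. (glue Gm Gp (real_of_int (int j) / real n) - glue Gm Gp (real_of_int (-1 - int i) / real n)) * pker \<gamma> (int j - (-1 - int i))) UNIV"
      by (rule infsum_reindex_bij_betw[OF bij_int_nat, symmetric])
    also have "\<dots> = infsum (\<lambda>j. (Gp (real j / real n) - Gm (- real (Suc i) / real n)) * pker \<gamma> (int (j + Suc i))) UNIV"
      by (rule infsum_cong) (simp only: glue_neg[OF n'] glue_pos p)
    also have "\<dots> = (\<Sum>j. (Gp (real j / real n) - Gm (- real (Suc i) / real n)) * pker \<gamma> (int (j + Suc i)))"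
      by (rule sum_conv[OF assms(1)]) (rule M)
    finally show ?thesis .
  qed
  have q: "real_of_int (-1 - int j - (-1 - int i)) * pker \<gamma> (-1 - int j - (-1 - int i))
      = - (real_of_int (int j - int i) * pker \<gamma> (int j - int i))" for j
    using pker_sym[of \<gamma> "int j - int i"] by (simp add: algebra_simps)
  have i2: "infsum (\<lambda>y. real_of_int (y - (-1 - int i)) * pker \<gamma> (y - (-1 - int i))) {..-1}
     = - (\<Sum>l. real (l + Suc i) * pker \<gamma> (int (l + Suc i)))"
    using infsum_reindex_bij_betw[OF bij_neg_nat, of "\<lambda>y. real_of_int (y - (-1 - int i)) * pker \<gamma> (y - (-1 - int i))", symmetric]
      tailE[OF assms(1), of i] by (simp only: q infsum_uminus o_def)
  have neg: "\<not> (-1 - int i \<ge> 0)" by simp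
  show ?thesis unfolding Rop_def using i1 i2 neg by simp
qed



lemma Rop_bounds:
  assumes g: "\<gamma> > 2" and a: "\<alpha> > 0" and r: "robin_pair \<gamma> \<alpha> Gm Gp"
  shows "\<exists>C. \<forall>n>0. \<bar>infsum (Rop \<gamma> \<alpha> Gm Gp n) {0::int..}\<bar> \<le> C / real n ^ 2 \<and>
                 \<bar>infsum (Rop \<gamma> \<alpha> Gm Gp n) {..-1::int}\<bar> \<le> C / real n ^ 2"
proof -
  have sGm: "schwartz Gm" and sGp: "schwartz Gp" using r unfolding robin_pair_def by auto
  obtain Lm where Lm: "Lm \<ge> 0" "\<And>u. \<bar>Gm u - Gm 0\<bar> \<le> Lm * \<bar>u\<bar>" using schwartz_lip[OF sGm] by blast
  obtain Lp where Lp: "Lp \<ge> 0" "\<And>u. \<bar>Gp u - Gp 0\<bar> \<le> Lp * \<bar>u\<bar>" using schwartz_lip[OF sGp] by blast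
  obtain Mm where Mm: "\<And>u. \<bar>Gm u\<bar> \<le> Mm" using schwartz_facts(3)[OF sGm] by blast
  obtain Mp where Mp: "\<And>u. \<bar>Gp u\<bar> \<le> Mp" using schwartz_facts(3)[OF sGp] by blast
  define m where "m = (\<Sum>k. real k * pker \<gamma> (int k))"
  define \<kappa> where "\<kappa> = (\<Sum>k. real k ^ 2 * pker \<gamma> (int k))"
  have r0: "deriv Gm 0 = alpha_hat \<gamma> \<alpha> * (Gp 0 - Gm 0)" "deriv Gp 0 = alpha_hat \<gamma> \<alpha> * (Gp 0 - Gm 0)"
    using r unfolding robin_pair_def by (auto dest: spec[where x=0])
  have ah: "alpha_hat \<gamma> \<alpha> = \<alpha> * m / \<kappa>"
    unfolding alpha_hat_def m_def \<kappa>_def mean_eq[OF g] kappa_eq[OF g] ..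
  have nn: "\<And>k::nat. real k * pker \<gamma> (int k) \<le> real k ^ 2 * pker \<gamma> (int k)"
  proof -
    fix k :: nat
    have "real k \<le> real k ^ 2" by (metis of_nat_le_iff of_nat_power le_square power2_eq_square)
    then show "real k * pker \<gamma> (int k) \<le> real k ^ 2 * pker \<gamma> (int k)"
      using pker_nonneg by (intro mult_right_mono) auto
  qed
  have m0: "m \<ge> 0" unfolding m_def using pker_summable1[OF g] pker_nonneg by (auto intro!: suminf_nonneg)
  have mk: "m \<le> \<kappa>" unfolding m_def \<kappa>_def
    by (rule suminf_le[OF nn pker_summable1[OF g] pker_summable[OF g]])
  have key: "\<alpha> * (Gp 0 - Gm 0) * m = alpha_hat \<gamma> \<alpha> * (Gp 0 - Gm 0) * \<kappa>"
  proof (cases "\<kappa> = 0")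
    case True
    then have "m = 0" using m0 mk by linarith
    then show ?thesis using True by simp
  next
    case False
    then show ?thesis unfolding ah by (simp add: field_simps)
  qed
  have neg: "\<alpha> * (Gm 0 - Gp 0) * m = - (\<alpha> * (Gp 0 - Gm 0) * m)" by (simp add: algebra_simps)
  have rob1: "\<alpha> * (Gm 0 - Gp 0) * m + deriv Gp 0 * \<kappa> = 0"
    unfolding r0(2) using key neg by linarith
  have rob2: "\<alpha> * (Gp 0 - Gm 0) * m + (- deriv Gm 0) * \<kappa> = 0"
    unfolding r0(1) using key by (simp only: mult_minus_left)
  define L where "L = Lm + Lp"
  have L0: "L \<ge> 0" unfolding L_def using Lm Lp by simp
  define C where "C = 2 * \<alpha> * L * \<kappa>"
  have "\<bar>infsum (Rop \<gamma> \<alpha> Gm Gp n) {0::int..}\<bar> \<le> C / real n ^ 2 \<and>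
        \<bar>infsum (Rop \<gamma> \<alpha> Gm Gp n) {..-1::int}\<bar> \<le> C / real n ^ 2" if n: "n > 0" for n
  proof
    have n': "real n > 0" using n by simp
    have Cn: "2 * \<alpha> * L / real n ^ 2 * (\<Sum>k. real k ^ 2 * pker \<gamma> (int k)) = C / real n ^ 2"
      unfolding C_def \<kappa>_def by simp
    have hA1: "\<bar>Gm (- real (Suc j) / real n) - Gm 0\<bar> \<le> L * real (Suc j) / real n" for j
    proof -
      have "\<bar>Gm (- real (Suc j) / real n) - Gm 0\<bar> \<le> Lm * \<bar>- real (Suc j) / real n\<bar>" by (rule Lm(2))
      also have "\<dots> = Lm * real (Suc j) / real n" using n' by simp
      also have "\<dots> \<le> L * real (Suc j) / real n" unfolding L_def using Lp n'
        by (intro divide_right_mono mult_right_mono) auto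
      finally show ?thesis .
    qed
    have hB1: "\<bar>Gp (real i / real n) - Gp 0\<bar> \<le> L * real (Suc i) / real n" for i
    proof -
      have "\<bar>Gp (real i / real n) - Gp 0\<bar> \<le> Lp * \<bar>real i / real n\<bar>" by (rule Lp(2))
      also have "\<dots> = Lp * real i / real n" using n' by simp
      also have "\<dots> \<le> L * real (Suc i) / real n" unfolding L_def using Lm Lp n'
        by (intro divide_right_mono mult_mono) auto
      finally show ?thesis .
    qed
    note MB1 = main_bound[where q="\<lambda>k. pker \<gamma> (int k)" and A="\<lambda>j. Gm (- real (Suc j) / real n)"
        and B="\<lambda>i. Gp (real i / real n)" and n=n and L=L and \<alpha>=\<alpha> and Az="Gm 0" and Bz="Gp 0"
        and c="deriv Gp 0", OF pker_nonneg pker_summable[OF g] n L0 less_imp_le[OF a] hA1 hB1 rob1[unfolded m_def \<kappa>_def]]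
    have "infsum (Rop \<gamma> \<alpha> Gm Gp n) {0::int..} = infsum (\<lambda>i. Rop \<gamma> \<alpha> Gm Gp n (int i)) UNIV"
      by (rule infsum_reindex_bij_betw[OF bij_int_nat, symmetric])
    also have "\<dots> = infsum (\<lambda>i. \<alpha> / real n * (\<Sum>j. (Gm (- real (Suc j) / real n) - Gp (real i / real n)) * pker \<gamma> (int (j + Suc i)))
     + deriv Gp 0 / real n * (\<Sum>l. real (l + Suc i) * pker \<gamma> (int (l + Suc i)))) UNIV"
      by (rule infsum_cong) (rule rop_case1[OF g n Mm])
    also have "\<dots> = (\<Sum>i. \<alpha> / real n * (\<Sum>j. (Gm (- real (Suc j) / real n) - Gp (real i / real n)) * pker \<gamma> (int (j + Suc i)))
     + deriv Gp 0 / real n * (\<Sum>l. real (l + Suc i) * pker \<gamma> (int (l + Suc i))))"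
      by (rule infsum_eq_suminf_abs[OF MB1(1)])
    finally show "\<bar>infsum (Rop \<gamma> \<alpha> Gm Gp n) {0::int..}\<bar> \<le> C / real n ^ 2"
      using MB1(2)[unfolded Cn] by simp
    have hA2: "\<bar>Gp (real j / real n) - Gp 0\<bar> \<le> L * real (Suc j) / real n" for j by (rule hB1)
    have hB2: "\<bar>Gm (- real (Suc i) / real n) - Gm 0\<bar> \<le> L * real (Suc i) / real n" for i by (rule hA1)
    note MB2 = main_bound[where q="\<lambda>k. pker \<gamma> (int k)" and A="\<lambda>j. Gp (real j / real n)"
        and B="\<lambda>i. Gm (- real (Suc i) / real n)" and n=n and L=L and \<alpha>=\<alpha> and Az="Gp 0" and Bz="Gm 0"
        and c="- deriv Gm 0", OF pker_nonneg pker_summable[OF g] n L0 less_imp_le[OF a] hA2 hB2 rob2[unfolded m_def \<kappa>_def]]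
    have "infsum (Rop \<gamma> \<alpha> Gm Gp n) {..-1::int} = infsum (\<lambda>i. Rop \<gamma> \<alpha> Gm Gp n (-1 - int i)) UNIV"
      by (rule infsum_reindex_bij_betw[OF bij_neg_nat, symmetric])
    also have "\<dots> = infsum (\<lambda>i. \<alpha> / real n * (\<Sum>j. (Gp (real j / real n) - Gm (- real (Suc i) / real n)) * pker \<gamma> (int (j + Suc i)))
     + (- deriv Gm 0) / real n * (\<Sum>l. real (l + Suc i) * pker \<gamma> (int (l + Suc i)))) UNIV"
      by (rule infsum_cong) (rule rop_case2[OF g n Mp])
    also have "\<dots> = (\<Sum>i. \<alpha> / real n * (\<Sum>j. (Gp (real j / real n) - Gm (- real (Suc i) / real n)) * pker \<gamma> (int (j + Suc i)))
     + (- deriv Gm 0) / real n * (\<Sum>l. real (l + Suc i) * pker \<gamma> (int (l + Suc i))))"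
      by (rule infsum_eq_suminf_abs[OF MB2(1)])
    finally show "\<bar>infsum (Rop \<gamma> \<alpha> Gm Gp n) {..-1::int}\<bar> \<le> C / real n ^ 2"
      using MB2(2)[unfolded Cn] by simp
  qed
  then show ?thesis by blast
qed



lemma set_int_bound:
  fixes f :: "real \<Rightarrow> real"
  assumes B: "\<And>s. \<bar>f s\<bar> \<le> B" and t: "t \<ge> 0"
  shows "\<bar>LINT s:{0..t}|lborel. f s\<bar> \<le> B * t"
proof -
  define g where "g s = \<bar>indicator {0..t} s *\<^sub>R f s\<bar>" for s :: real
  have B0: "B \<ge> 0" using B[of 0] by linarith
  have "\<bar>LINT s:{0..t}|lborel. f s\<bar> \<le> integral\<^sup>L lborel g"
    unfolding set_lebesgue_integral_def g_def using integral_norm_bound[of lborel "\<lambda>s. indicator {0..t} s *\<^sub>R f s"]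
    by simp
  also have "\<dots> \<le> B * t"
  proof (cases "integrable lborel g")
    case True
    have int2: "integrable lborel (\<lambda>x. B * indicator {0..t} x)"
      using borel_integrable_atLeastAtMost[of 0 t "\<lambda>x. B"] by (simp add: mult.commute)
    have "integral\<^sup>L lborel g \<le> integral\<^sup>L lborel (\<lambda>x. B * (x ^ 0 * indicator {0..t} x))"
      by (rule integral_mono[OF True]) (use int2 B in \<open>auto simp: g_def indicator_def\<close>)
    also have "\<dots> = B * t"
      using integral_power[of 0 t 0] t by (simp add: integral_mult_right_zero)
    finally show ?thesis .
  next
    case False
    then show ?thesis using B0 t by (simp add: not_integrable_integral_eq)
  qed
  finally show ?thesis .
qed

lemma final_limit:
  fixes M :: "nat \<Rightarrow> 'a measure" and h :: "nat \<Rightarrow> real \<Rightarrow> 'a \<Rightarrow> real" and S :: "nat \<Rightarrow> real"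
  assumes P: "\<And>n. prob_space (M n)" and T: "T > 0" and SC: "\<forall>n>0. \<bar>S n\<bar> \<le> C / real n ^ 2"
    and h: "\<And>n s \<omega>. \<bar>h n s \<omega>\<bar> \<le> 1"
  shows "(\<lambda>n. \<integral>\<^sup>+\<omega>. (SUP t\<in>{0..T}. ennreal
            ((LINT s:{0..t}|lborel. (real n ^ 2 / sqrt (real n)) * S n * h n s \<omega>) ^ 2)) \<partial>(M n))
          \<longlonglongrightarrow> 0"
proof -
  have C0: "C \<ge> 0" using SC[rule_format, of 1] by simp
  define D where "D n = C^2 * T^2 * (1 / real n)" for n :: nat
  have bnd: "(\<integral>\<^sup>+\<omega>. (SUP t\<in>{0..T}. ennreal
            ((LINT s:{0..t}|lborel. (real n ^ 2 / sqrt (real n)) * S n * h n s \<omega>) ^ 2)) \<partial>(M n))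
        \<le> ennreal (D n)" if n: "n > 0" for n
  proof -
    define K where "K = real n ^ 2 / sqrt (real n) * S n"
    have n': "real n > 0" using n by simp
    have K: "\<bar>K\<bar> \<le> C / sqrt (real n)"
    proof -
      have "\<bar>K\<bar> = real n ^ 2 / sqrt (real n) * \<bar>S n\<bar>" unfolding K_def by (simp add: abs_mult)
      also have "\<dots> \<le> real n ^ 2 / sqrt (real n) * (C / real n ^ 2)"
        using SC n by (intro mult_left_mono) auto
      also have "\<dots> = C / sqrt (real n)" using n' by (simp add: field_simps)
      finally show ?thesis .
    qed
    have pt: "ennreal ((LINT s:{0..t}|lborel. K * h n s \<omega>) ^ 2) \<le> ennreal (D n)" if t: "t \<in> {0..T}" for t \<omega>
    proof -
      have "\<bar>LINT s:{0..t}|lborel. K * h n s \<omega>\<bar> \<le> \<bar>K\<bar> * t"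
        by (rule set_int_bound) (use h t in \<open>auto simp: abs_mult intro: mult_left_le\<close>)
      also have "\<dots> \<le> C / sqrt (real n) * T"
        using K t C0 by (intro mult_mono) auto
      finally have a: "\<bar>LINT s:{0..t}|lborel. K * h n s \<omega>\<bar> \<le> C / sqrt (real n) * T" .
      have "(LINT s:{0..t}|lborel. K * h n s \<omega>) ^ 2 = \<bar>LINT s:{0..t}|lborel. K * h n s \<omega>\<bar> ^ 2"
        by simp
      also have "\<dots> \<le> (C / sqrt (real n) * T) ^ 2"
        using a by (intro power_mono) auto
      also have "\<dots> = D n" unfolding D_def using n' by (simp add: power_mult_distrib power_divide)
      finally show ?thesis by (rule ennreal_leI)
    qed
    have "(\<integral>\<^sup>+\<omega>. (SUP t\<in>{0..T}. ennreal ((LINT s:{0..t}|lborel. K * h n s \<omega>) ^ 2)) \<partial>(M n))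
        \<le> (\<integral>\<^sup>+\<omega>. ennreal (D n) \<partial>(M n))"
      by (rule nn_integral_mono) (use pt in \<open>auto intro: SUP_least\<close>)
    also have "\<dots> = ennreal (D n)"
      using prob_space.emeasure_space_1[OF P[of n]] by (simp add: nn_integral_const)
    finally show ?thesis unfolding K_def .
  qed
  have lim: "(\<lambda>n. ennreal (D n)) \<longlonglongrightarrow> ennreal 0"
    unfolding D_def by (intro tendsto_ennrealI tendsto_mult_right_zero lim_inverse_n')
  show ?thesis
  proof (rule tendsto_sandwich[OF _ _ tendsto_const lim[unfolded ennreal_0]])
    show "\<forall>\<^sub>F n in sequentially. 0 \<le> (\<integral>\<^sup>+\<omega>. (SUP t\<in>{0..T}. ennreal
            ((LINT s:{0..t}|lborel. (real n ^ 2 / sqrt (real n)) * S n * h n s \<omega>) ^ 2)) \<partial>(M n))"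
      by simp
    show "\<forall>\<^sub>F n in sequentially. (\<integral>\<^sup>+\<omega>. (SUP t\<in>{0..T}. ennreal
            ((LINT s:{0..t}|lborel. (real n ^ 2 / sqrt (real n)) * S n * h n s \<omega>) ^ 2)) \<partial>(M n)) \<le> ennreal (D n)"
      by (rule eventually_mono[OF eventually_gt_at_top[of 0]]) (rule bnd)
  qed
qed


theorem proposition5p3:
  fixes \<gamma> \<alpha> b T :: real
    and Gm Gp :: "real \<Rightarrow> real"
    and M :: "nat \<Rightarrow> 'a measure"
    and X :: "nat \<Rightarrow> real \<Rightarrow> 'a \<Rightarrow> config"
  assumes "\<gamma> > 2" and "\<alpha> > 0" and "0 < b" and "b < 1" and "T > 0"
    and "robin_pair \<gamma> \<alpha> Gm Gp"
    and "\<And>n. exclusion_solution \<gamma> \<alpha> b n (M n) (X n)"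
  shows "((\<lambda>n. \<integral>\<^sup>+\<omega>. (SUP t\<in>{0..T}. ennreal
            ((LINT s:{0..t}|lborel. (real n ^ 2 / sqrt (real n))
                * (\<Sum>\<^sub>\<infinity>x\<in>{0::int..}. Rop \<gamma> \<alpha> Gm Gp n x)
                * (of_bool (X n (s * real n ^ 2) \<omega> 0) - b)) ^ 2)) \<partial>(M n))
          \<longlonglongrightarrow> 0) \<and>
         ((\<lambda>n. \<integral>\<^sup>+\<omega>. (SUP t\<in>{0..T}. ennreal
            ((LINT s:{0..t}|lborel. (real n ^ 2 / sqrt (real n))
                * (\<Sum>\<^sub>\<infinity>x\<in>{..-1::int}. Rop \<gamma> \<alpha> Gm Gp n x)
                * (of_bool (X n (s * real n ^ 2) \<omega> (-1)) - b)) ^ 2)) \<partial>(M n))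
          \<longlonglongrightarrow> 0)"
proof -
  obtain C where C: "\<forall>n>0. \<bar>infsum (Rop \<gamma> \<alpha> Gm Gp n) {0::int..}\<bar> \<le> C / real n ^ 2 \<and>
                 \<bar>infsum (Rop \<gamma> \<alpha> Gm Gp n) {..-1::int}\<bar> \<le> C / real n ^ 2"
    using Rop_bounds[OF assms(1) assms(2) assms(6)] by blast
  have P: "\<And>n. prob_space (M n)" using assms(7) unfolding exclusion_solution_def by blast
  have hb: "\<And>n s \<omega>. \<bar>of_bool (X n (s * real n ^ 2) \<omega> z) - b\<bar> \<le> 1" for z
    using assms(3) assms(4) by auto
  show ?thesis
  proof
    show "(\<lambda>n. \<integral>\<^sup>+\<omega>. (SUP t\<in>{0..T}. ennreal
            ((LINT s:{0..t}|lborel. (real n ^ 2 / sqrt (real n))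
                * (\<Sum>\<^sub>\<infinity>x\<in>{0::int..}. Rop \<gamma> \<alpha> Gm Gp n x)
                * (of_bool (X n (s * real n ^ 2) \<omega> 0) - b)) ^ 2)) \<partial>(M n))
          \<longlonglongrightarrow> 0"
      by (rule final_limit[where S="\<lambda>n. infsum (Rop \<gamma> \<alpha> Gm Gp n) {0::int..}"
            and h="\<lambda>n s \<omega>. of_bool (X n (s * real n ^ 2) \<omega> 0) - b", OF P assms(5)])
         (use C hb in auto)
    show "(\<lambda>n. \<integral>\<^sup>+\<omega>. (SUP t\<in>{0..T}. ennreal
            ((LINT s:{0..t}|lborel. (real n ^ 2 / sqrt (real n))
                * (\<Sum>\<^sub>\<infinity>x\<in>{..-1::int}. Rop \<gamma> \<alpha> Gm Gp n x)
                * (of_bool (X n (s * real n ^ 2) \<omega> (-1)) - b)) ^ 2)) \<partial>(M n))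
          \<longlonglongrightarrow> 0"
      by (rule final_limit[where S="\<lambda>n. infsum (Rop \<gamma> \<alpha> Gm Gp n) {..-1::int}"
            and h="\<lambda>n s \<omega>. of_bool (X n (s * real n ^ 2) \<omega> (-1)) - b", OF P assms(5)])
         (use C hb in auto)
  qed
qed

end
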